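(* Let $\Omega\subset\mathbb{R}^2$ be a smooth bounded domain, let $(u_p)_{p>1}$ be a family of sign-changing solutions of $-\Delta u=|u|^{p-1}u$ in $\Omega$, $u=0$ on $\partial\Omega$, with $p\int_\Omega|\nabla u_p|^2dx\to\beta\in\mathbb{R}$, and let $k\in\mathbb{N}\setminus\{0\}$ and families $(x_{i,p})$, $i=1,\dots,k$, be such that (along a sequence $p\to+\infty$) $p|u_p(x_{i,p})|^{p-1}\to+\infty$ and $(\mathcal P_1^k)$, $(\mathcal P_2^k)$, $(\mathcal P_3^k)$ hold, with no family $(x_{k+1,p})$ extending them as described below. Then $$\frac{\operatorname{dist}(x_{i,p},NL_p)}{\mu_{i,p}}\to+\infty\quad\text{as }p\to+\infty,\ \text{for all }i\in\{1,\dots,k\}.$$ As a consequence, for each $i$, letting $\mathcal N_{i,p}\subset\Omega$ be the nodal domain of $u_p$ containing $x_{i,p}$, $u_p^i:=u_p\chi_{\mathcal N_{i,p}}$, and $$z_{i,p}(x):=\frac{p}{u_p(x_{i,p})}\left(u_p^i(x_{i,p}+\mu_{i,p}x)-u_p(x_{i,p})\right),\quad x\in\widetilde{\mathcal N}_{i,p}:=\frac{\mathcal N_{i,p}-x_{i,p}}{\mu_{i,p}},$$ one has $z_{i,p}\to U$ in $C^1_{loc}(\mathbb{R}^2)$.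
   Context: $NL_p:=\{x\in\Omega:u_p(x)=0\}$ is the nodal line; $\chi_A$ is the characteristic function of $A$. $\mu_{i,p}:=(p|u_p(x_{i,p})|^{p-1})^{-1/2}$, $R_{n,p}(x):=\min_{i\le n}|x-x_{i,p}|$, $U(x)=\log\left(\frac{1}{1+\frac18|x|^2}\right)^2$. $(\mathcal P_1^n)$: $|x_{i,p}-x_{j,p}|/\mu_{i,p}\to+\infty$ for $i\ne j$. $(\mathcal P_2^n)$: $v_{i,p}(x):=\frac{p}{u_p(x_{i,p})}(u_p(x_{i,p}+\mu_{i,p}x)-u_p(x_{i,p}))\to U$ in $C^1_{loc}(\mathbb{R}^2)$ for each $i$. $(\mathcal P_3^n)$: $\exists C>0$ with $pR_{n,p}(x)^2|u_p(x)|^{p-1}\le C$ for $p$ large, all $x\in\Omega$. Maximality: for no family $(x_{k+1,p})$ can one extract a further sequence along which $(\mathcal P_1^{k+1}),(\mathcal P_2^{k+1}),(\mathcal P_3^{k+1})$ hold for $(x_{i,p})_{i=1,\dots,k+1}$ (such $k$ and families exist by the preceding proposition of the paper). *)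

theory Defs
  imports "HOL-Analysis.Analysis"
begin

type_synonym pt = "real^2"

definition smooth_fun :: "(real \<Rightarrow> real) \<Rightarrow> bool" where
  "smooth_fun g \<longleftrightarrow> (\<exists>f :: nat \<Rightarrow> real \<Rightarrow> real. f 0 = g \<and>
      (\<forall>k x. (f k has_real_derivative f (Suc k) x) (at x)))"

definition smooth_bounded_domain :: "pt set \<Rightarrow> bool" where
  "smooth_bounded_domain \<Omega> \<longleftrightarrow> open \<Omega> \<and> bounded \<Omega> \<and> connected \<Omega> \<and> \<Omega> \<noteq> {} \<and>
     (\<forall>a\<in>frontier \<Omega>. \<exists>r>0. \<exists>(Q :: pt \<Rightarrow> pt) g. orthogonal_transformation Q \<and> smooth_fun g \<and>
        \<Omega> \<inter> ball a r = {y \<in> ball a r. (Q (y - a)) $ 2 < g ((Q (y - a)) $ 1)})"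

definition partial :: "2 \<Rightarrow> (pt \<Rightarrow> real) \<Rightarrow> pt \<Rightarrow> real" where
  "partial i f = (\<lambda>x. frechet_derivative f (at x) (axis i 1))"

definition grad :: "(pt \<Rightarrow> real) \<Rightarrow> pt \<Rightarrow> pt" where
  "grad f x = (\<chi> i. partial i f x)"

definition laplacian :: "(pt \<Rightarrow> real) \<Rightarrow> pt \<Rightarrow> real" where
  "laplacian f x = (\<Sum>i\<in>UNIV. partial i (partial i f) x)"

definition lane_emden_solution :: "pt set \<Rightarrow> real \<Rightarrow> (pt \<Rightarrow> real) \<Rightarrow> bool" where
  "lane_emden_solution \<Omega> p u \<longleftrightarrow>
     (\<forall>x\<in>\<Omega>. u differentiable (at x) \<and> (\<forall>i. partial i u differentiable (at x))) \<and>
     (\<forall>i j. continuous_on \<Omega> (partial i (partial j u))) \<and>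
     continuous_on (closure \<Omega>) u \<and> (\<forall>x\<in>frontier \<Omega>. u x = 0) \<and>
     (\<forall>x\<in>\<Omega>. - laplacian u x = \<bar>u x\<bar> powr (p - 1) * u x) \<and>
     (\<lambda>x. (norm (grad u x))\<^sup>2) integrable_on \<Omega>"

definition sign_changing :: "pt set \<Rightarrow> (pt \<Rightarrow> real) \<Rightarrow> bool" where
  "sign_changing \<Omega> u \<longleftrightarrow> (\<exists>a\<in>\<Omega>. u a > 0) \<and> (\<exists>b\<in>\<Omega>. u b < 0)"

definition nodal_line :: "pt set \<Rightarrow> (pt \<Rightarrow> real) \<Rightarrow> pt set" where
  "nodal_line \<Omega> u = {x \<in> \<Omega>. u x = 0}"

definition nodal_domain :: "pt set \<Rightarrow> (pt \<Rightarrow> real) \<Rightarrow> pt \<Rightarrow> pt set" where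
  "nodal_domain \<Omega> u x = connected_component_set {y \<in> \<Omega>. u y \<noteq> 0} x"

definition U :: "pt \<Rightarrow> real" where
  "U x = ln ((1 / (1 + (1/8) * (norm x)\<^sup>2))\<^sup>2)"

definition C1loc_conv :: "(nat \<Rightarrow> pt \<Rightarrow> real) \<Rightarrow> (nat \<Rightarrow> pt set) \<Rightarrow> (pt \<Rightarrow> real) \<Rightarrow> bool" where
  "C1loc_conv f D g \<longleftrightarrow> (\<forall>K. compact K \<longrightarrow> (\<forall>\<epsilon>>0. eventually (\<lambda>n. K \<subseteq> D n \<and>
      (\<forall>x\<in>K. f n differentiable (at x) \<and> \<bar>f n x - g x\<bar> < \<epsilon> \<and>
               norm (grad (f n) x - grad g x) < \<epsilon>)) sequentially))"

text \<open>u p is the solution for exponent p, x i p is the i-th concentration point.\<close>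
definition mu :: "(real \<Rightarrow> pt \<Rightarrow> real) \<Rightarrow> (nat \<Rightarrow> real \<Rightarrow> pt) \<Rightarrow> nat \<Rightarrow> real \<Rightarrow> real" where
  "mu u x i p = (p * \<bar>u p (x i p)\<bar> powr (p - 1)) powr (-1/2)"

definition Rdist :: "(nat \<Rightarrow> real \<Rightarrow> pt) \<Rightarrow> nat \<Rightarrow> real \<Rightarrow> pt \<Rightarrow> real" where
  "Rdist x k p y = Min ((\<lambda>i. dist y (x i p)) ` {1..k})"

definition resc :: "(real \<Rightarrow> pt \<Rightarrow> real) \<Rightarrow> (nat \<Rightarrow> real \<Rightarrow> pt) \<Rightarrow> nat \<Rightarrow> real \<Rightarrow> pt \<Rightarrow> real" where
  "resc u x i p y = p / u p (x i p) * (u p (x i p + mu u x i p *\<^sub>R y) - u p (x i p))"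

definition P1 :: "(nat \<Rightarrow> real) \<Rightarrow> (real \<Rightarrow> pt \<Rightarrow> real) \<Rightarrow> (nat \<Rightarrow> real \<Rightarrow> pt) \<Rightarrow> nat \<Rightarrow> bool" where
  "P1 ps u x k \<longleftrightarrow> (\<forall>i\<in>{1..k}. \<forall>j\<in>{1..k}. i \<noteq> j \<longrightarrow>
     filterlim (\<lambda>n. norm (x i (ps n) - x j (ps n)) / mu u x i (ps n)) at_top sequentially)"

definition P2 :: "pt set \<Rightarrow> (nat \<Rightarrow> real) \<Rightarrow> (real \<Rightarrow> pt \<Rightarrow> real) \<Rightarrow> (nat \<Rightarrow> real \<Rightarrow> pt) \<Rightarrow> nat \<Rightarrow> bool" where
  "P2 \<Omega> ps u x k \<longleftrightarrow> (\<forall>i\<in>{1..k}.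
     C1loc_conv (\<lambda>n. resc u x i (ps n))
                (\<lambda>n. {y. x i (ps n) + mu u x i (ps n) *\<^sub>R y \<in> \<Omega>}) U)"

definition P3 :: "pt set \<Rightarrow> (nat \<Rightarrow> real) \<Rightarrow> (real \<Rightarrow> pt \<Rightarrow> real) \<Rightarrow> (nat \<Rightarrow> real \<Rightarrow> pt) \<Rightarrow> nat \<Rightarrow> bool" where
  "P3 \<Omega> ps u x k \<longleftrightarrow> (\<exists>C>0. eventually (\<lambda>n. \<forall>y\<in>\<Omega>.
     ps n * (Rdist x k (ps n) y)\<^sup>2 * \<bar>u (ps n) y\<bar> powr (ps n - 1) \<le> C) sequentially)"

definition zfun :: "pt set \<Rightarrow> (real \<Rightarrow> pt \<Rightarrow> real) \<Rightarrow> (nat \<Rightarrow> real \<Rightarrow> pt) \<Rightarrow> nat \<Rightarrow> real \<Rightarrow> pt \<Rightarrow> real" where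
  "zfun \<Omega> u x i p y = p / u p (x i p) *
     (u p (x i p + mu u x i p *\<^sub>R y) * indicator (nodal_domain \<Omega> (u p) (x i p)) (x i p + mu u x i p *\<^sub>R y)
      - u p (x i p))"

definition zdom :: "pt set \<Rightarrow> (real \<Rightarrow> pt \<Rightarrow> real) \<Rightarrow> (nat \<Rightarrow> real \<Rightarrow> pt) \<Rightarrow> nat \<Rightarrow> real \<Rightarrow> pt set" where
  "zdom \<Omega> u x i p = {y. x i p + mu u x i p *\<^sub>R y \<in> nodal_domain \<Omega> (u p) (x i p)}"

end

theory Submission
  imports Defs
begin

lemma frechet_loc:
  fixes f g :: "pt \<Rightarrow> real"
  assumes "f differentiable (at y)" "open T" "y \<in> T" "\<And>z. z \<in> T \<Longrightarrow> g z = f z"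
  shows "g differentiable (at y) \<and> grad g y = grad f y"
proof -
  have d: "(f has_derivative frechet_derivative f (at y)) (at y)"
    using assms(1) frechet_derivative_works by blast
  have dg: "(g has_derivative frechet_derivative f (at y)) (at y)"
    by (rule has_derivative_transform_within_open[OF d assms(2,3)]) (use assms(4) in auto)
  have "frechet_derivative g (at y) = frechet_derivative f (at y)"
    using dg frechet_derivative_at by metis
  then show ?thesis using dg differentiable_def by (auto simp add: grad_def partial_def)
qed

lemma U_lower: "U y \<ge> - (norm y)\<^sup>2 / 4"
proof -
  define t where "t = (norm y)\<^sup>2 / 8"
  have t0: "t \<ge> 0" unfolding t_def by simp
  have "U y = ln ((1 / (1 + t))\<^sup>2)" unfolding U_def t_def by simp
  also have "\<dots> = - 2 * ln (1 + t)" using t0 by (simp add: ln_div ln_realpow)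
  also have "\<dots> \<ge> - 2 * t" using ln_add_one_self_le_self[OF t0] by simp
  finally show ?thesis unfolding t_def by simp
qed

lemma zero_exists:
  fixes f :: "pt \<Rightarrow> real"
  assumes "connected \<Omega>" "continuous_on \<Omega> f" "a\<in>\<Omega>" "f a > 0" "b\<in>\<Omega>" "f b < 0"
  shows "\<exists>z\<in>\<Omega>. f z = 0"
proof -
  have c: "connected (f ` \<Omega>)" using connected_continuous_image assms by blast
  have "f a \<in> f ` \<Omega>" "f b \<in> f ` \<Omega>" using assms by auto
  then have "0 \<in> f ` \<Omega>" using c unfolding connected_iff_interval using assms(4,6)
    by (meson less_imp_le)
  then show ?thesis by auto
qed
lemma main_i:
  fixes \<Omega> :: "pt set" and u :: "real \<Rightarrow> pt \<Rightarrow> real" and ps :: "nat \<Rightarrow> real"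
    and x :: "nat \<Rightarrow> real \<Rightarrow> pt" and i :: nat
  assumes C: "C1loc_conv (\<lambda>n. resc u x i (ps n)) (\<lambda>n. {y. x i (ps n) + mu u x i (ps n) *\<^sub>R y \<in> \<Omega>}) U"
    and conc: "filterlim (\<lambda>n. ps n * \<bar>u (ps n) (x i (ps n))\<bar> powr (ps n - 1)) at_top sequentially"
    and ps_lim: "filterlim ps at_top sequentially"
    and NL: "\<And>n. nodal_line \<Omega> (u (ps n)) \<noteq> {}"
  shows "filterlim (\<lambda>n. infdist (x i (ps n)) (nodal_line \<Omega> (u (ps n))) / mu u x i (ps n))
             at_top sequentially
         \<and> C1loc_conv (\<lambda>n. zfun \<Omega> u x i (ps n)) (\<lambda>n. zdom \<Omega> u x i (ps n)) U"
proof -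
  define a where "a = (\<lambda>n. x i (ps n))"
  define m where "m = (\<lambda>n. mu u x i (ps n))"
  define f where "f = (\<lambda>n. resc u x i (ps n))"
  define D where "D = (\<lambda>n. {y. a n + m n *\<^sub>R y \<in> \<Omega>})"
  have C': "C1loc_conv f D U" using C unfolding f_def D_def a_def m_def .
  have fval: "f n y = ps n / u (ps n) (a n) * (u (ps n) (a n + m n *\<^sub>R y) - u (ps n) (a n))" for n y
    unfolding f_def resc_def a_def m_def by simp
  have ev: "eventually (\<lambda>n. cball 0 R \<subseteq> D n \<and> (\<forall>y\<in>cball 0 R. u (ps n) (a n + m n *\<^sub>R y) \<noteq> 0
        \<and> f n differentiable (at y) \<and> \<bar>f n y - U y\<bar> < e \<and> norm (grad (f n) y - grad U y) < e)
        \<and> m n > 0 \<and> u (ps n) (a n) \<noteq> 0) sequentially" if R: "R > 0" and e: "e > 0" "e \<le> 1" for R e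
  proof -
    have E1: "eventually (\<lambda>n. cball 0 R \<subseteq> D n \<and>
      (\<forall>y\<in>cball 0 R. f n differentiable (at y) \<and> \<bar>f n y - U y\<bar> < e \<and>
               norm (grad (f n) y - grad U y) < e)) sequentially"
      using C' e unfolding C1loc_conv_def by auto
    have E2: "eventually (\<lambda>n. 0 < ps n * \<bar>u (ps n) (a n)\<bar> powr (ps n - 1)) sequentially"
      using conc unfolding filterlim_at_top_dense a_def by auto
    have E3: "eventually (\<lambda>n. R\<^sup>2/4 + 1 < ps n) sequentially"
      using ps_lim unfolding filterlim_at_top_dense by auto
    show ?thesis using E1 E2 E3
    proof eventually_elim
      case (elim n)
      have ua: "u (ps n) (a n) \<noteq> 0" using elim(2) by auto
      have pos: "ps n > 0" using elim(2) ua
        by (metis zero_less_mult_pos2 powr_gt_zero abs_not_less_zero less_eq_real_def powr_ge_zero zero_less_abs_iff)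
      have mpos: "m n > 0" using elim(2) unfolding m_def mu_def a_def by (metis powr_gt_zero less_irrefl)
      have "u (ps n) (a n + m n *\<^sub>R y) \<noteq> 0" if y: "y \<in> cball 0 R" for y
      proof
        assume z: "u (ps n) (a n + m n *\<^sub>R y) = 0"
        have "f n y = - ps n" using z ua by (simp add: fval)
        moreover have "\<bar>f n y - U y\<bar> < e" using elim(1) y by auto
        moreover have "U y \<ge> - (norm y)\<^sup>2 / 4" by (rule U_lower)
        moreover have "(norm y)\<^sup>2 \<le> R\<^sup>2" using y R by (simp add: power_mono)
        ultimately show False using elim(3) e by linarith
      qed
      then show ?case using elim(1) ua mpos by auto
    qed
  qed
  have part1: "filterlim (\<lambda>n. infdist (a n) (nodal_line \<Omega> (u (ps n))) / m n) at_top sequentially"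
    unfolding filterlim_at_top
  proof
    fix Z :: real
    define R where "R = max Z 1"
    have R: "R > 0" unfolding R_def by simp
    show "eventually (\<lambda>n. Z \<le> infdist (a n) (nodal_line \<Omega> (u (ps n))) / m n) sequentially"
      using ev[OF R zero_less_one order_refl]
    proof eventually_elim
      case (elim n)
      have ge: "R * m n \<le> dist (a n) z" if z: "z \<in> nodal_line \<Omega> (u (ps n))" for z
      proof (rule ccontr)
        assume "\<not> R * m n \<le> dist (a n) z"
        define y where "y = (1 / m n) *\<^sub>R (z - a n)"
        have zy: "a n + m n *\<^sub>R y = z" using elim unfolding y_def by simp
        have "norm y = dist (a n) z / m n" using elim unfolding y_def
          by (simp add: dist_norm norm_minus_commute)
        then have "y \<in> cball 0 R" using elim \<open>\<not> R * m n \<le> dist (a n) z\<close>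
          by (simp add: pos_divide_le_eq)
        then show False using elim z zy unfolding nodal_line_def by auto
      qed
      have "R * m n \<le> infdist (a n) (nodal_line \<Omega> (u (ps n)))"
        unfolding infdist_notempty[OF NL] by (rule cINF_greatest[OF NL ge])
      then have "R \<le> infdist (a n) (nodal_line \<Omega> (u (ps n))) / m n"
        using elim by (simp add: pos_le_divide_eq)
      then show ?case unfolding R_def by simp
    qed
  qed
  have part2: "C1loc_conv (\<lambda>n. zfun \<Omega> u x i (ps n)) (\<lambda>n. zdom \<Omega> u x i (ps n)) U"
    unfolding C1loc_conv_def
  proof (intro allI impI)
    fix K :: "pt set" and e :: real
    assume K: "compact K" and e: "e > 0"
    obtain R0 where R0: "\<And>y. y \<in> K \<Longrightarrow> norm y \<le> R0"
      using compact_imp_bounded[OF K] unfolding bounded_iff by blast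
    define R where "R = max R0 0 + 1"
    have R: "R > 0" unfolding R_def by simp
    have KR: "y \<in> K \<Longrightarrow> ball y 1 \<subseteq> cball 0 R" for y
      using R0[of y] unfolding R_def
    proof (clarsimp simp: dist_norm)
      fix z assume "y \<in> K" "norm y \<le> R0" "norm (y - z) < 1"
      moreover have "norm z \<le> norm y + norm (y - z)" by (metis norm_minus_commute norm_triangle_sub)
      ultimately show "norm z \<le> max R0 0 + 1" by linarith
    qed
    have e1: "0 < min e 1" "min e 1 \<le> 1" using e by auto
    show "eventually (\<lambda>n. K \<subseteq> zdom \<Omega> u x i (ps n) \<and>
      (\<forall>y\<in>K. zfun \<Omega> u x i (ps n) differentiable (at y) \<and> \<bar>zfun \<Omega> u x i (ps n) y - U y\<bar> < e \<and>
               norm (grad (zfun \<Omega> u x i (ps n)) y - grad U y) < e)) sequentially"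
      using ev[OF R e1]
    proof eventually_elim
      case (elim n)
      define B where "B = (\<lambda>y. a n + m n *\<^sub>R y) ` cball 0 R"
      have Bc: "connected B" unfolding B_def
        by (intro connected_continuous_image continuous_intros) (simp add: convex_connected)
      have aB: "a n \<in> B" unfolding B_def using R by (auto intro!: image_eqI[of _ _ 0])
      have BS: "B \<subseteq> {y \<in> \<Omega>. u (ps n) y \<noteq> 0}" unfolding B_def using elim unfolding D_def by auto
      have Bnd: "B \<subseteq> nodal_domain \<Omega> (u (ps n)) (a n)"
        unfolding nodal_domain_def by (rule connected_component_maximal[OF aB Bc BS])
      have zeq: "zfun \<Omega> u x i (ps n) y = f n y" if "y \<in> cball 0 R" for y
      proof -
        have "a n + m n *\<^sub>R y \<in> nodal_domain \<Omega> (u (ps n)) (a n)" using Bnd that unfolding B_def by (auto simp: image_subset_iff)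
        then show ?thesis unfolding zfun_def fval a_def m_def by simp
      qed
      have zd: "cball 0 R \<subseteq> zdom \<Omega> u x i (ps n)"
        using Bnd unfolding zdom_def B_def a_def m_def by auto
      have Kc: "K \<subseteq> cball 0 R" using KR by (meson centre_in_ball subsetD subsetI zero_less_one)
      have "zfun \<Omega> u x i (ps n) differentiable (at y) \<and> \<bar>zfun \<Omega> u x i (ps n) y - U y\<bar> < e \<and>
               norm (grad (zfun \<Omega> u x i (ps n)) y - grad U y) < e" if y: "y \<in> K" for y
      proof -
        have yR: "y \<in> cball 0 R" using Kc y by auto
        have fl: "zfun \<Omega> u x i (ps n) differentiable (at y) \<and> grad (zfun \<Omega> u x i (ps n)) y = grad (f n) y"
          by (rule frechet_loc[of "f n" y "ball y 1"]) (use elim yR KR[OF y] zeq in auto)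
        show ?thesis using fl zeq[OF yR] elim yR by auto
      qed
      then show ?case using zd Kc by auto
    qed
  qed
  show ?thesis using part1 part2 unfolding a_def m_def by simp
qed

theorem corollary2p4:
  fixes \<Omega> :: "pt set" and u :: "real \<Rightarrow> pt \<Rightarrow> real" and \<beta> :: real
    and ps :: "nat \<Rightarrow> real" and k :: nat and x :: "nat \<Rightarrow> real \<Rightarrow> pt"
  assumes dom: "smooth_bounded_domain \<Omega>"
    and sol: "\<And>p. p > 1 \<Longrightarrow> lane_emden_solution \<Omega> p (u p) \<and> sign_changing \<Omega> (u p)"
    and energy: "((\<lambda>p. p * integral \<Omega> (\<lambda>y. (norm (grad (u p) y))\<^sup>2)) \<longlongrightarrow> \<beta>) at_top"
    and k: "k \<ge> 1"
    and ps_gt: "\<And>n. ps n > 1" and ps_lim: "filterlim ps at_top sequentially"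
    and pts: "\<And>i p. i \<in> {1..k} \<Longrightarrow> p > 1 \<Longrightarrow> x i p \<in> \<Omega>"
    and conc: "\<And>i. i \<in> {1..k} \<Longrightarrow>
        filterlim (\<lambda>n. ps n * \<bar>u (ps n) (x i (ps n))\<bar> powr (ps n - 1)) at_top sequentially"
    and p1: "P1 ps u x k" and p2: "P2 \<Omega> ps u x k" and p3: "P3 \<Omega> ps u x k"
    and maximal: "\<not> (\<exists>(y :: real \<Rightarrow> pt) (r :: nat \<Rightarrow> nat). strict_mono r \<and> (\<forall>p>1. y p \<in> \<Omega>) \<and>
        P1 (ps \<circ> r) u (x(Suc k := y)) (Suc k) \<and>
        P2 \<Omega> (ps \<circ> r) u (x(Suc k := y)) (Suc k) \<and>
        P3 \<Omega> (ps \<circ> r) u (x(Suc k := y)) (Suc k))"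
  shows "\<forall>i\<in>{1..k}.
           filterlim (\<lambda>n. infdist (x i (ps n)) (nodal_line \<Omega> (u (ps n))) / mu u x i (ps n))
             at_top sequentially
         \<and> C1loc_conv (\<lambda>n. zfun \<Omega> u x i (ps n)) (\<lambda>n. zdom \<Omega> u x i (ps n)) U"
proof
  fix i assume i: "i \<in> {1..k}"
  have C: "C1loc_conv (\<lambda>n. resc u x i (ps n)) (\<lambda>n. {y. x i (ps n) + mu u x i (ps n) *\<^sub>R y \<in> \<Omega>}) U"
    using p2 i unfolding P2_def by blast
  have NL: "nodal_line \<Omega> (u (ps n)) \<noteq> {}" for n
  proof -
    have s: "lane_emden_solution \<Omega> (ps n) (u (ps n))" "sign_changing \<Omega> (u (ps n))"
      using sol[OF ps_gt[of n]] by auto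
    have "continuous_on \<Omega> (u (ps n))"
      using s(1) unfolding lane_emden_solution_def
      by (meson continuous_at_imp_continuous_on differentiable_imp_continuous_within)
    moreover have "connected \<Omega>" using dom unfolding smooth_bounded_domain_def by blast
    ultimately obtain z where "z \<in> \<Omega>" "u (ps n) z = 0"
      using s(2) zero_exists unfolding sign_changing_def by metis
    then show ?thesis unfolding nodal_line_def by auto
  qed
  show "filterlim (\<lambda>n. infdist (x i (ps n)) (nodal_line \<Omega> (u (ps n))) / mu u x i (ps n))
             at_top sequentially
         \<and> C1loc_conv (\<lambda>n. zfun \<Omega> u x i (ps n)) (\<lambda>n. zdom \<Omega> u x i (ps n)) U"
    by (rule main_i[OF C conc[OF i] ps_lim NL])
qed

end
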